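(* Let $(G,M,I)$ be a finite formal context and fix an integer $k\ge 0$. Consider the cosheaf $\mathcal F_k$ on $D(G,M,I)$ with costalks $\mathcal F_k(\sigma)=C_k(\Delta[\sigma'])$ (the degree-$k$ part of the real simplicial chain complex of the full simplex on $\sigma'$) and extension maps $\mathcal F_k(\sigma\subseteq\tau):\mathcal F_k(\tau)\to\mathcal F_k(\sigma)$ induced by the inclusions $\tau'\subseteq\sigma'$. Then the cellular cosheaf homology of $\mathcal F_k$ satisfies $H_j(\mathcal F_k)=0$ for all $j>0$.
   Context: A formal context is a triple $(G,M,I)$ with $I\subseteq G\times M$; for $A\subseteq G$, $A'=\{m: gIm\ \forall g\in A\}$, for $B\subseteq M$, $B'=\{g: gIm\ \forall m\in B\}$. The Dowker complex $D(G,M,I)$ is the abstract simplicial complex on $G$ whose simplices are the nonempty $\sigma\subseteq G$ with $\sigma'\ne\emptyset$. Fix linear orders on $G$ and $M$ (used to orient simplices). For a cosheaf $\mathcal F$ of real vector spaces on $D(G,M,I)$ (vector spaces $\mathcal F(\sigma)$ and linear maps $\mathcal F(\sigma\subseteq\tau):\mathcal F(\tau)\to\mathcal F(\sigma)$, functorial in $\sigma\subseteq\tau$), its cellular cosheaf homology is the homology of the chain complex $C_j=\bigoplus_{\dim\tau=j}\mathcal F(\tau)$ with $\partial_j x=\sum_{i=0}^{j}(-1)^i\mathcal F(\tau_i\subseteq\tau)(x)$ for $x\in\mathcal F(\tau)$, $\tau=\{g_0<\dots<g_j\}$, $\tau_i=\tau\setminus\{g_i\}$. *)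

theory Defs
  imports Complex_Main
begin

text \<open>Derivation operator for a formal context (G,M,I): for A a set of objects,
  A' is the set of attributes shared by all objects of A.\<close>
definition intent :: "'m set \<Rightarrow> ('g \<times> 'm) set \<Rightarrow> 'g set \<Rightarrow> 'm set" where
  "intent M I A = {m \<in> M. \<forall>g\<in>A. (g, m) \<in> I}"

definition dowker :: "'g set \<Rightarrow> 'm set \<Rightarrow> ('g \<times> 'm) set \<Rightarrow> 'g set set" where
  "dowker G M I = {\<sigma>. \<sigma> \<subseteq> G \<and> \<sigma> \<noteq> {} \<and> intent M I \<sigma> \<noteq> {}}"

definition ksimplices :: "nat \<Rightarrow> 'm set \<Rightarrow> 'm set set" where
  "ksimplices k S = {\<rho>. \<rho> \<subseteq> S \<and> card \<rho> = k + 1}"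

text \<open>Costalk F_k(sigma) = C_k(Delta[sigma']) as real-valued coefficient functions
  on the k-simplices of Delta[sigma'] (zero elsewhere).\<close>
definition costalk :: "'g set \<Rightarrow> 'm set \<Rightarrow> ('g \<times> 'm) set \<Rightarrow> nat \<Rightarrow> 'g set \<Rightarrow> ('m set \<Rightarrow> real) set" where
  "costalk G M I k \<sigma> = {x. \<forall>\<rho>. \<rho> \<notin> ksimplices k (intent M I \<sigma>) \<longrightarrow> x \<rho> = 0}"

text \<open>Extension map F_k(sigma \<subseteq> tau): F_k(tau) \<rightarrow> F_k(sigma), the chain map induced by
  the inclusion tau' \<subseteq> sigma' (a basis simplex rho is sent to rho).\<close>
definition ext_map :: "'m set \<Rightarrow> ('g \<times> 'm) set \<Rightarrow> nat \<Rightarrow> 'g set \<Rightarrow> 'g set \<Rightarrow> ('m set \<Rightarrow> real) \<Rightarrow> ('m set \<Rightarrow> real)" where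
  "ext_map M I k \<sigma> \<tau> x = (\<lambda>\<rho>. if \<rho> \<in> ksimplices k (intent M I \<tau>) then x \<rho> else 0)"

definition dsimp :: "'g set \<Rightarrow> 'm set \<Rightarrow> ('g \<times> 'm) set \<Rightarrow> nat \<Rightarrow> 'g set set" where
  "dsimp G M I j = {\<tau> \<in> dowker G M I. card \<tau> = j + 1}"

text \<open>Cellular chains C_j = direct sum over j-simplices tau of F_k(tau).\<close>
definition cchains :: "'g set \<Rightarrow> 'm set \<Rightarrow> ('g \<times> 'm) set \<Rightarrow> nat \<Rightarrow> nat \<Rightarrow> ('g set \<Rightarrow> 'm set \<Rightarrow> real) set" where
  "cchains G M I k j = {c. \<forall>\<tau>. (\<tau> \<in> dsimp G M I j \<longrightarrow> c \<tau> \<in> costalk G M I k \<tau>)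
                                \<and> (\<tau> \<notin> dsimp G M I j \<longrightarrow> c \<tau> = (\<lambda>_. 0))}"

definition face :: "'g::linorder set \<Rightarrow> nat \<Rightarrow> 'g set" where
  "face \<tau> i = \<tau> - {sorted_list_of_set \<tau> ! i}"

definition cbd :: "'g::linorder set \<Rightarrow> 'm set \<Rightarrow> ('g \<times> 'm) set \<Rightarrow> nat \<Rightarrow> nat
                   \<Rightarrow> ('g set \<Rightarrow> 'm set \<Rightarrow> real) \<Rightarrow> ('g set \<Rightarrow> 'm set \<Rightarrow> real)" where
  "cbd G M I k j c = (\<lambda>\<sigma> \<rho>. \<Sum>\<tau>\<in>dsimp G M I j. \<Sum>i\<in>{0..j}.
      if face \<tau> i = \<sigma> then (-1) ^ i * ext_map M I k \<sigma> \<tau> (c \<tau>) \<rho> else 0)"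

definition homology_vanishes :: "'g::linorder set \<Rightarrow> 'm set \<Rightarrow> ('g \<times> 'm) set \<Rightarrow> nat \<Rightarrow> nat \<Rightarrow> bool" where
  "homology_vanishes G M I k j \<longleftrightarrow>
     (\<forall>c \<in> cchains G M I k j. cbd G M I k j c = (\<lambda>_ _. 0) \<longrightarrow>
        (\<exists>d \<in> cchains G M I k (Suc j). cbd G M I k (Suc j) d = c))"

end

theory Submission imports Defs begin

lemma idx_nth:
  fixes \<tau> :: "'a::linorder set"
  assumes "finite \<tau>" "i < card \<tau>"
  shows "card {x\<in>\<tau>. x < sorted_list_of_set \<tau> ! i} = i"
proof -
  define l where "l = sorted_list_of_set \<tau>"
  have sl: "set l = \<tau>" "length l = card \<tau>" "sorted_wrt (<) l" "distinct l"
    using assms by (auto simp: l_def)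
  have "{x\<in>\<tau>. x < l ! i} = (!) l ` {..<i}"
  proof
    show "{x \<in> \<tau>. x < l ! i} \<subseteq> (!) l ` {..<i}"
    proof
      fix x assume x: "x \<in> {x \<in> \<tau>. x < l ! i}"
      then obtain j where j: "j < length l" "x = l ! j" using sl by (auto simp: in_set_conv_nth)
      have "j < i"
      proof (rule ccontr)
        assume "\<not> j < i"
        then have "j = i \<or> i < j" by auto
        then have "l ! i \<le> l ! j" using sorted_wrt_nth_less[OF sl(3), of i j] j by auto
        then show False using x j by auto
      qed
      then show "x \<in> (!) l ` {..<i}" using j by auto
    qed
  next
    show "(!) l ` {..<i} \<subseteq> {x \<in> \<tau>. x < l ! i}"
      using sorted_wrt_nth_less[OF sl(3)] sl assms(2) by (auto simp: nth_mem)
  qed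
  moreover have "inj_on ((!) l) {..<i}"
    by (rule inj_on_nth) (use sl assms(2) in auto)
  ultimately show ?thesis by (simp add: l_def card_image)
qed

lemma sum_sorted_reindex:
  fixes \<tau> :: "'a::linorder set"
  assumes "finite \<tau>" "card \<tau> = Suc n"
  shows "(\<Sum>i\<in>{0..n}. F (sorted_list_of_set \<tau> ! i) i) = (\<Sum>g\<in>\<tau>. F g (card {x\<in>\<tau>. x < g}))"
proof -
  define l where "l = sorted_list_of_set \<tau>"
  have sl: "set l = \<tau>" "length l = card \<tau>" "distinct l"
    using assms by (auto simp: l_def)
  have b: "bij_betw ((!) l) {0..n} \<tau>"
    by (rule bij_betw_nth) (use sl assms in auto)
  have "(\<Sum>g\<in>\<tau>. F g (card {x\<in>\<tau>. x < g})) = (\<Sum>i\<in>{0..n}. F (l ! i) (card {x\<in>\<tau>. x < l ! i}))"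
    using sum.reindex_bij_betw[OF b, of "\<lambda>g. F g (card {x\<in>\<tau>. x < g})"] by simp
  also have "\<dots> = (\<Sum>i\<in>{0..n}. F (l ! i) i)"
    by (rule sum.cong) (use idx_nth[OF assms(1)] assms(2) in \<open>auto simp: l_def\<close>)
  finally show ?thesis by (simp add: l_def)
qed


lemma cchains_zero:
  assumes "c \<in> cchains G M I k n" "\<rho> \<notin> ksimplices k (intent M I \<tau>) \<or> \<tau> \<notin> dsimp G M I n"
  shows "c \<tau> \<rho> = 0"
  using assms unfolding cchains_def costalk_def by (cases "\<tau> \<in> dsimp G M I n") auto

lemma cbd_expand:
  fixes G :: "'g::linorder set"
  assumes G: "finite G" and c: "c \<in> cchains G M I k n"
  shows "cbd G M I k n c \<sigma> \<rho> = (\<Sum>g\<in>G-\<sigma>. (-1) ^ card {x\<in>\<sigma>. x < g} * c (insert g \<sigma>) \<rho>)"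
proof -
  let ?D = "dsimp G M I n"
  have extc: "ext_map M I k \<sigma>' \<tau> (c \<tau>) \<rho> = c \<tau> \<rho>" for \<sigma>' \<tau>
    using cchains_zero[OF c, of \<rho> \<tau>] by (auto simp: ext_map_def)
  have Dsub: "?D \<subseteq> Pow G" by (auto simp: dsimp_def dowker_def)
  have finD: "finite ?D" using finite_subset[OF Dsub] G by auto
  have "cbd G M I k n c \<sigma> \<rho> = (\<Sum>\<tau>\<in>?D. \<Sum>i\<in>{0..n}. if face \<tau> i = \<sigma> then (-1) ^ i * c \<tau> \<rho> else 0)"
    unfolding cbd_def extc by (rule refl)
  also have "\<dots> = (\<Sum>\<tau>\<in>?D. \<Sum>g\<in>\<tau>. if \<tau> - {g} = \<sigma> then (-1) ^ card {x\<in>\<tau>. x < g} * c \<tau> \<rho> else 0)"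
  proof (rule sum.cong[OF refl])
    fix \<tau> assume t: "\<tau> \<in> ?D"
    then have ft: "finite \<tau>" "card \<tau> = Suc n" using Dsub G finite_subset[of \<tau> G] t by (auto simp: dsimp_def)
    show "(\<Sum>i\<in>{0..n}. if face \<tau> i = \<sigma> then (-1) ^ i * c \<tau> \<rho> else 0)
        = (\<Sum>g\<in>\<tau>. if \<tau> - {g} = \<sigma> then (-1) ^ card {x\<in>\<tau>. x < g} * c \<tau> \<rho> else 0)"
      using sum_sorted_reindex[OF ft, of "\<lambda>g i. if \<tau> - {g} = \<sigma> then (-1) ^ i * c \<tau> \<rho> else 0"]
      by (simp add: face_def)
  qed
  also have "\<dots> = (\<Sum>\<tau>\<in>?D. \<Sum>g\<in>G. if g \<in> \<tau> \<and> \<tau> - {g} = \<sigma> then (-1) ^ card {x\<in>\<tau>. x < g} * c \<tau> \<rho> else 0)"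
  proof (rule sum.cong[OF refl])
    fix \<tau> assume t: "\<tau> \<in> ?D"
    then have "\<tau> \<subseteq> G" using Dsub by auto
    then show "(\<Sum>g\<in>\<tau>. if \<tau> - {g} = \<sigma> then (-1) ^ card {x\<in>\<tau>. x < g} * c \<tau> \<rho> else 0)
        = (\<Sum>g\<in>G. if g \<in> \<tau> \<and> \<tau> - {g} = \<sigma> then (-1) ^ card {x\<in>\<tau>. x < g} * c \<tau> \<rho> else 0)"
      by (intro sum.mono_neutral_cong_left G) auto
  qed
  also have "\<dots> = (\<Sum>g\<in>G. \<Sum>\<tau>\<in>?D. if g \<in> \<tau> \<and> \<tau> - {g} = \<sigma> then (-1) ^ card {x\<in>\<tau>. x < g} * c \<tau> \<rho> else 0)"
    by (rule sum.swap)
  also have "\<dots> = (\<Sum>g\<in>G. if g \<notin> \<sigma> \<and> insert g \<sigma> \<in> ?D then (-1) ^ card {x\<in>\<sigma>. x < g} * c (insert g \<sigma>) \<rho> else 0)"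
  proof (rule sum.cong[OF refl])
    fix g assume g: "g \<in> G"
    have e: "(if g \<in> \<tau> \<and> \<tau> - {g} = \<sigma> then (-1) ^ card {x\<in>\<tau>. x < g} * c \<tau> \<rho> else 0)
      = (if \<tau> = insert g \<sigma> then (if g \<notin> \<sigma> then (-1) ^ card {x\<in>\<sigma>. x < g} * c (insert g \<sigma>) \<rho> else 0) else 0)" for \<tau>
    proof -
      have "(g \<in> \<tau> \<and> \<tau> - {g} = \<sigma>) = (\<tau> = insert g \<sigma> \<and> g \<notin> \<sigma>)" by auto
      moreover have "{x\<in>insert g \<sigma>. x < g} = {x\<in>\<sigma>. x < g}" by auto
      ultimately show ?thesis by auto
    qed
    show "(\<Sum>\<tau>\<in>?D. if g \<in> \<tau> \<and> \<tau> - {g} = \<sigma> then (-1) ^ card {x\<in>\<tau>. x < g} * c \<tau> \<rho> else 0)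
      = (if g \<notin> \<sigma> \<and> insert g \<sigma> \<in> ?D then (-1) ^ card {x\<in>\<sigma>. x < g} * c (insert g \<sigma>) \<rho> else 0)"
      unfolding e using finD by (simp add: sum.delta')
  qed
  also have "\<dots> = (\<Sum>g\<in>G. if g \<notin> \<sigma> then (-1) ^ card {x\<in>\<sigma>. x < g} * c (insert g \<sigma>) \<rho> else 0)"
    by (rule sum.cong[OF refl]) (use cchains_zero[OF c] in auto)
  also have "\<dots> = (\<Sum>g\<in>G-\<sigma>. (-1) ^ card {x\<in>\<sigma>. x < g} * c (insert g \<sigma>) \<rho>)"
    by (simp add: sum.If_cases[OF G] Diff_eq Compl_eq)
  finally show ?thesis .
qed


lemma ks_intent:
  "\<rho> \<in> ksimplices k (intent M I \<tau>) \<longleftrightarrow> \<rho> \<subseteq> M \<and> card \<rho> = Suc k \<and> (\<forall>g\<in>\<tau>. \<forall>m\<in>\<rho>. (g, m) \<in> I)"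
  by (auto simp: ksimplices_def intent_def)

lemma dsimp_iff:
  "\<tau> \<in> dsimp G M I n \<longleftrightarrow> \<tau> \<subseteq> G \<and> \<tau> \<noteq> {} \<and> intent M I \<tau> \<noteq> {} \<and> card \<tau> = Suc n"
  by (auto simp: dsimp_def dowker_def)

lemma ks_intent_ne: "\<rho> \<in> ksimplices k (intent M I \<tau>) \<Longrightarrow> intent M I \<tau> \<noteq> {}"
  by (auto simp: ksimplices_def)

theorem mainTheorem5:
  fixes G :: "'g::linorder set" and M :: "'m::linorder set" and I :: "('g \<times> 'm) set"
    and k :: nat
  assumes "finite G" and "finite M" and "I \<subseteq> G \<times> M"
  shows "\<forall>j > 0. homology_vanishes G M I k j"
proof (intro allI impI)
  fix j :: nat assume "j > 0"
  then obtain j' where jj: "j = Suc j'" by (cases j) auto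
  have G: "finite G" by fact
  show "homology_vanishes G M I k j"
    unfolding homology_vanishes_def
  proof (intro ballI impI)
    fix c assume c: "c \<in> cchains G M I k j" and cyc: "cbd G M I k j c = (\<lambda>_ _. 0)"
    define E where "E \<rho> = {g\<in>G. \<forall>m\<in>\<rho>. (g, m) \<in> I}" for \<rho> :: "'m set"
    define v where "v \<rho> = Min (E \<rho>)" for \<rho>
    define d where "d \<sigma> \<rho> = (if \<sigma> \<in> dsimp G M I (Suc j) \<and> \<rho> \<in> ksimplices k (intent M I \<sigma>)
         \<and> Min \<sigma> = v \<rho> then c (\<sigma> - {Min \<sigma>}) \<rho> else 0)" for \<sigma> \<rho>
    have d: "d \<in> cchains G M I k (Suc j)"
      unfolding cchains_def costalk_def by (auto simp: d_def fun_eq_iff)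
    have cz: "c \<tau> \<rho> \<noteq> 0 \<Longrightarrow> \<tau> \<in> dsimp G M I j \<and> \<rho> \<in> ksimplices k (intent M I \<tau>)" for \<tau> \<rho>
      using cchains_zero[OF c] by blast
    have finsub: "A \<subseteq> G \<Longrightarrow> finite A" for A using G finite_subset by blast
    show "\<exists>d\<in>cchains G M I k (Suc j). cbd G M I k (Suc j) d = c"
    proof (intro bexI[OF _ d] ext)
      fix \<sigma> \<rho>
      let ?s = "\<lambda>A g. (-1::real) ^ card {x\<in>A. x < g}"
      have "cbd G M I k (Suc j) d \<sigma> \<rho> = (\<Sum>g\<in>G-\<sigma>. ?s \<sigma> g * d (insert g \<sigma>) \<rho>)"
        by (rule cbd_expand[OF G d])
      also have "\<dots> = c \<sigma> \<rho>"
      proof (cases "\<sigma> \<in> dsimp G M I j \<and> \<rho> \<in> ksimplices k (intent M I \<sigma>)")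
        case False
        then have c0: "c \<sigma> \<rho> = 0" using cz by blast
        have "d (insert g \<sigma>) \<rho> = 0" if g: "g \<in> G - \<sigma>" for g
        proof (rule ccontr)
          assume "d (insert g \<sigma>) \<rho> \<noteq> 0"
          then have h: "insert g \<sigma> \<in> dsimp G M I (Suc j)" "\<rho> \<in> ksimplices k (intent M I (insert g \<sigma>))"
            by (auto simp: d_def split: if_splits)
          then have sG: "\<sigma> \<subseteq> G" and ci: "card (insert g \<sigma>) = Suc (Suc j)" by (auto simp: dsimp_iff)
          then have cs: "card \<sigma> = Suc j" using g finsub by auto
          have ks: "\<rho> \<in> ksimplices k (intent M I \<sigma>)" using h(2) by (auto simp: ks_intent)
          have "\<sigma> \<in> dsimp G M I j" using sG cs ks_intent_ne[OF ks] by (auto simp: dsimp_iff)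
          then show False using False ks by blast
        qed
        then show ?thesis using c0 by simp
      next
        case True
        then have sG: "\<sigma> \<subseteq> G" and cs: "card \<sigma> = Suc j" and sne: "\<sigma> \<noteq> {}"
          and ks: "\<rho> \<in> ksimplices k (intent M I \<sigma>)" by (auto simp: dsimp_iff)
        have fs: "finite \<sigma>" using finsub sG .
        have sE: "\<sigma> \<subseteq> E \<rho>" using sG ks by (auto simp: E_def ks_intent)
        have finE: "finite (E \<rho>)" using finsub by (auto simp: E_def)
        have vE: "v \<rho> \<in> E \<rho>" using sE sne finE by (auto simp: v_def intro!: Min_in)
        have vle: "x \<in> E \<rho> \<Longrightarrow> v \<rho> \<le> x" for x using finE by (simp add: v_def)
        have goodE: "g \<in> G \<Longrightarrow> \<rho> \<in> ksimplices k (intent M I (insert g A)) \<Longrightarrow> g \<in> E \<rho>" for g A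
          by (auto simp: ks_intent E_def)
        show ?thesis
        proof (cases "v \<rho> \<in> \<sigma>")
          case False
          let ?v = "v \<rho>"
          have "(\<Sum>g\<in>G-\<sigma>. ?s \<sigma> g * d (insert g \<sigma>) \<rho>)
              = (\<Sum>g\<in>G-\<sigma>. if g = ?v then ?s \<sigma> ?v * d (insert ?v \<sigma>) \<rho> else 0)"
          proof (rule sum.cong[OF refl])
            fix g assume g: "g \<in> G - \<sigma>"
            show "?s \<sigma> g * d (insert g \<sigma>) \<rho> = (if g = ?v then ?s \<sigma> ?v * d (insert ?v \<sigma>) \<rho> else 0)"
            proof (cases "g = ?v")
              case False
              have "Min (insert g \<sigma>) \<in> insert g \<sigma>" using fs by (intro Min_in) auto
              then have "Min (insert g \<sigma>) \<noteq> ?v" using False \<open>?v \<notin> \<sigma>\<close> by auto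
              then show ?thesis using False by (simp add: d_def)
            qed simp
          qed
          also have "\<dots> = ?s \<sigma> ?v * d (insert ?v \<sigma>) \<rho>"
            using vE G by (simp add: E_def sum.delta' False)
          also have "\<dots> = c \<sigma> \<rho>"
          proof -
            have "{x\<in>\<sigma>. x < ?v} = {}" using sE vle by force
            then have s1: "?s \<sigma> ?v = 1" by (metis card.empty power_0)
            have vG: "?v \<in> G" using vE by (simp add: E_def)
            have ks2: "\<rho> \<in> ksimplices k (intent M I (insert ?v \<sigma>))"
              using ks vE by (auto simp: ks_intent E_def)
            have "insert ?v \<sigma> \<in> dsimp G M I (Suc j)"
              using sG vG ks_intent_ne[OF ks2] cs fs False by (auto simp: dsimp_iff)
            moreover have "Min (insert ?v \<sigma>) = ?v"
              using fs sE vle by (intro Min_eqI) auto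
            moreover have "insert ?v \<sigma> - {?v} = \<sigma>" using False by auto
            ultimately show ?thesis using s1 ks2 by (simp add: d_def)
          qed
          finally show ?thesis .
        next
          case True
          let ?v = "v \<rho>"
          define \<sigma>0 where "\<sigma>0 = \<sigma> - {?v}"
          have Mins: "Min \<sigma> = ?v" using fs sE vle True by (intro Min_eqI) auto
          have v0: "?v \<notin> \<sigma>0" and s_eq: "insert ?v \<sigma>0 = \<sigma>" using True by (auto simp: \<sigma>0_def)
          have GD: "G - \<sigma>0 = insert ?v (G - \<sigma>)" using True sG by (auto simp: \<sigma>0_def)
          have s0: "?s \<sigma>0 ?v = 1"
          proof -
            have "{x\<in>\<sigma>0. x < ?v} = {}" using sE vle by (force simp: \<sigma>0_def)
            then show ?thesis by (metis card.empty power_0)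
          qed
          have "0 = cbd G M I k j c \<sigma>0 \<rho>" using cyc by simp
          also have "\<dots> = (\<Sum>g\<in>G-\<sigma>0. ?s \<sigma>0 g * c (insert g \<sigma>0) \<rho>)"
            by (rule cbd_expand[OF G c])
          also have "\<dots> = ?s \<sigma>0 ?v * c \<sigma> \<rho> + (\<Sum>g\<in>G-\<sigma>. ?s \<sigma>0 g * c (insert g \<sigma>0) \<rho>)"
            unfolding GD using G True s_eq by (subst sum.insert) auto
          finally have "0 = ?s \<sigma>0 ?v * c \<sigma> \<rho> + (\<Sum>g\<in>G-\<sigma>. ?s \<sigma>0 g * c (insert g \<sigma>0) \<rho>)" .
          then have cyc0: "c \<sigma> \<rho> = - (\<Sum>g\<in>G-\<sigma>. ?s \<sigma>0 g * c (insert g \<sigma>0) \<rho>)" unfolding s0 by linarith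
          have tm: "?s \<sigma> g * d (insert g \<sigma>) \<rho> = - (?s \<sigma>0 g * c (insert g \<sigma>0) \<rho>)"
            if g: "g \<in> G - \<sigma>" for g
          proof -
            have gv: "g \<noteq> ?v" using g True by auto
            show ?thesis
            proof (cases "g < ?v")
              case True
              have c0: "c (insert g \<sigma>0) \<rho> = 0"
              proof (rule ccontr)
                assume "c (insert g \<sigma>0) \<rho> \<noteq> 0"
                then have "g \<in> E \<rho>" using cz goodE g by blast
                then show False using vle True by force
              qed
              have "Min (insert g \<sigma>) = g"
                using fs sE vle True by (intro Min_eqI) force+
              then have "d (insert g \<sigma>) \<rho> = 0" using gv by (simp add: d_def)
              then show ?thesis using c0 by simp
            next
              case False
              then have gt: "?v < g" using gv by auto
              have Mi: "Min (insert g \<sigma>) = ?v"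
                using fs sE vle gt True by (intro Min_eqI) force+
              have ins: "insert g \<sigma> - {?v} = insert g \<sigma>0" using gv by (auto simp: \<sigma>0_def)
              have "{x\<in>\<sigma>. x < g} = insert ?v {x\<in>\<sigma>0. x < g}" using True gt by (auto simp: \<sigma>0_def)
              then have "card {x\<in>\<sigma>. x < g} = Suc (card {x\<in>\<sigma>0. x < g})"
                using fs v0 by (simp add: \<sigma>0_def)
              then have sg: "?s \<sigma> g = - ?s \<sigma>0 g" by simp
              have "d (insert g \<sigma>) \<rho> = c (insert g \<sigma>0) \<rho>"
              proof (cases "c (insert g \<sigma>0) \<rho> = 0")
                case True
                then show ?thesis using Mi ins by (simp add: d_def)
              next
                case False
                then have h: "\<rho> \<in> ksimplices k (intent M I (insert g \<sigma>0))" using cz by blast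
                then have gE: "g \<in> E \<rho>" using goodE g by blast
                have ks2: "\<rho> \<in> ksimplices k (intent M I (insert g \<sigma>))"
                  using ks gE by (auto simp: ks_intent E_def)
                have "insert g \<sigma> \<in> dsimp G M I (Suc j)"
                  using sG g ks_intent_ne[OF ks2] cs fs by (auto simp: dsimp_iff)
                then show ?thesis using ks2 Mi ins by (simp add: d_def)
              qed
              then show ?thesis using sg by simp
            qed
          qed
          have "(\<Sum>g\<in>G-\<sigma>. ?s \<sigma> g * d (insert g \<sigma>) \<rho>) = (\<Sum>g\<in>G-\<sigma>. - (?s \<sigma>0 g * c (insert g \<sigma>0) \<rho>))"
            using tm by (rule sum.cong[OF refl])
          also have "\<dots> = c \<sigma> \<rho>" using cyc0 by (simp add: sum_negf)
          finally show ?thesis .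
        qed
      qed
      finally show "cbd G M I k (Suc j) d \<sigma> \<rho> = c \<sigma> \<rho>" .
    qed
  qed
qed

end
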